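(* Let $\mu>0$ and integers $n,r,s$ satisfy $n/\mu\ge\max\{4,r\}$ and $s\ge(12n/\mu)\log(12n/\mu)$. Let $\xi_H$ be the Haar probability measure on $\mathbb{V}_{s,r}$ and $\mathbb{K}(s,r,\sqrt{\mu r/n})=\{\boldsymbol{U}\in\mathbb{R}^{s\times r}:\boldsymbol{U}^\top\boldsymbol{U}=\boldsymbol{I}_r,\ \|\boldsymbol{U}\|_{2,\infty}\le\sqrt{\mu r/n}\}$. Then $\xi_H(\mathbb{K}(s,r,\sqrt{\mu r/n}))\ge\tfrac12$.
   Context: $\mathbb{V}_{s,r}=\{\boldsymbol{U}\in\mathbb{R}^{s\times r}:\boldsymbol{U}^\top\boldsymbol{U}=\boldsymbol{I}_r\}$; the Haar measure is the probability measure on it invariant under left multiplication by $s\times s$ orthogonal matrices and right multiplication by $r\times r$ orthogonal matrices. $\|\boldsymbol{U}\|_{2,\infty}$ is the maximum Euclidean norm of a row of $\boldsymbol{U}$. *)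

theory Defs
  imports "HOL-Analysis.Analysis" "HOL-Probability.Probability"
begin

text \<open>Stiefel manifold V_{s,r}: s x r real matrices with orthonormal columns.
  Matrices are real^'r^'s (rows indexed by 's, columns by 'r), so s = CARD('s), r = CARD('r).\<close>
definition stiefel :: "(real^'r^'s) set" where
  "stiefel = {U. transpose U ** U = mat 1}"

definition norm_2inf :: "real^'r^'s \<Rightarrow> real" where
  "norm_2inf U = Max (range (\<lambda>i. norm (U $ i)))"

definition incoherent_set :: "real \<Rightarrow> (real^'r^'s) set" where
  "incoherent_set c = {U \<in> stiefel. norm_2inf U \<le> c}"

definition haar_stiefel :: "(real^'r^'s) measure \<Rightarrow> bool" where
  "haar_stiefel M \<longleftrightarrow> prob_space M \<and> sets M = sets borel \<and> emeasure M stiefel = 1 \<and>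
     (\<forall>Q::real^'s^'s. orthogonal_matrix Q \<longrightarrow> distr M M (\<lambda>U. Q ** U) = M) \<and>
     (\<forall>R::real^'r^'r. orthogonal_matrix R \<longrightarrow> distr M M (\<lambda>U. U ** R) = M)"

end

theory Submission imports Defs "HOL-Computational_Algebra.Polynomial" begin


lemma stiefel_iff:
  "U \<in> stiefel \<longleftrightarrow> (\<forall>l m. (\<Sum>i\<in>UNIV. U$i$l * U$i$m) = (if l = m then 1 else (0::real)))"
  by (auto simp: stiefel_def vec_eq_iff matrix_matrix_mult_def transpose_def mat_def)

lemma stiefel_eq:
  "(stiefel :: (real^'r^'s) set) = (\<Inter>l. \<Inter>m. {U. (\<Sum>i\<in>UNIV. U$i$l * U$i$m) = (if l = m then 1 else (0::real))})"
  using stiefel_iff by blast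

lemma closed_stiefel: "closed (stiefel :: (real^'r^'s) set)"
  unfolding stiefel_eq
  by (intro closed_INT ballI closed_Collect_eq continuous_intros)

lemma stiefel_entry_le: assumes "U \<in> stiefel" shows "\<bar>U$i$l\<bar> \<le> (1::real)"
proof -
  have "(\<Sum>j\<in>UNIV. U$j$l * U$j$l) = 1" using assms stiefel_iff by metis
  moreover have "U$i$l * U$i$l \<le> (\<Sum>j\<in>UNIV. U$j$l * U$j$l)"
    by (rule member_le_sum) auto
  ultimately have "(U$i$l)^2 \<le> 1" by (simp add: power2_eq_square)
  thus ?thesis by (simp add: abs_square_le_1)
qed

lemma bounded_stiefel: "bounded (stiefel :: (real^'r^'s) set)"
proof -
  have "norm U \<le> real CARD('s) * real CARD('r)" if "U \<in> stiefel" for U :: "real^'r^'s"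
  proof -
    have "norm U \<le> (\<Sum>i\<in>UNIV. norm (U$i))" unfolding norm_vec_def by (rule L2_set_le_sum) auto
    also have "\<dots> \<le> (\<Sum>i\<in>(UNIV::'s set). real CARD('r))"
    proof (rule sum_mono)
      fix i
      have "norm (U$i) \<le> (\<Sum>l\<in>UNIV. \<bar>U$i$l\<bar>)" by (rule norm_le_l1_cart)
      also have "\<dots> \<le> (\<Sum>l\<in>(UNIV::'r set). 1)" by (intro sum_mono stiefel_entry_le that)
      finally show "norm (U$i) \<le> real CARD('r)" by simp
    qed
    finally show ?thesis by simp
  qed
  thus ?thesis unfolding bounded_iff by blast
qed

lemma compact_stiefel: "compact (stiefel :: (real^'r^'s) set)"
  using closed_stiefel bounded_stiefel by (simp add: compact_eq_bounded_closed)

lemma cont_bounded_stiefel: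
  fixes f :: "real^'r^'s \<Rightarrow> real"
  assumes "continuous_on UNIV f"
  obtains B where "\<And>U. U \<in> stiefel \<Longrightarrow> \<bar>f U\<bar> \<le> B"
proof -
  have "compact (f ` stiefel)"
    by (rule compact_continuous_image[OF continuous_on_subset[OF assms] compact_stiefel]) auto
  then obtain B where "\<forall>x\<in>f ` stiefel. norm x \<le> B" using compact_imp_bounded bounded_iff by metis
  thus ?thesis using that by auto
qed



definition comb :: "real^'s \<Rightarrow> real^'r^'s \<Rightarrow> real^'r" where
  "comb a U = (\<Sum>i\<in>UNIV. a$i *\<^sub>R U$i)"

definition G :: "real^'s \<Rightarrow> real^'r^'s \<Rightarrow> real" where
  "G a U = (norm (comb a U))^2"

lemma cont_comb[continuous_intros]: "continuous_on UNIV (\<lambda>U. comb a U)"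
  unfolding comb_def by (intro continuous_intros)

lemma cont_G[continuous_intros]: "continuous_on UNIV (\<lambda>U. G a U)"
  unfolding G_def by (intro continuous_intros)

lemma comb_mult: "comb a (Q ** U) = comb (transpose Q *v a) U"
proof -
  have "(\<Sum>x\<in>UNIV. \<Sum>n\<in>UNIV. a $ x * (Q $ x $ n * U $ n $ l)) =
        (\<Sum>n\<in>UNIV. \<Sum>x\<in>UNIV. a $ x * (Q $ x $ n * U $ n $ l))" for l
    by (rule sum.swap)
  then show ?thesis
    by (simp add: comb_def vec_eq_iff matrix_matrix_mult_def matrix_vector_mult_def transpose_def
      sum_distrib_left sum_distrib_right mult.assoc mult.commute)
       (intro allI sum.cong refl, simp add: mult_ac)
qed

lemma G_mult: "G a (Q ** U) = G (transpose Q *v a) U"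
  by (simp add: G_def comb_mult)

lemma comb_scale: "comb (c *\<^sub>R a) U = c *\<^sub>R comb a U"
  by (simp add: comb_def scaleR_sum_right)

lemma G_scale: "G (c *\<^sub>R a) U = c^2 * G a U"
  by (simp add: G_def comb_scale power_mult_distrib)

lemma axis_scale: "(axis i (1::real) $ x) *\<^sub>R (v::real^'r) = (if x = i then v else 0)"
  by (auto simp: axis_def)

lemma comb_axis: "comb (axis i 1) U = U$i"
  unfolding comb_def axis_scale by simp

lemma comb_add: "comb (a + b) U = comb a U + comb b U"
  by (simp add: comb_def scaleR_add_left sum.distrib)

lemma comb_two: "comb (axis i 1 + t *\<^sub>R axis j 1) U = U$i + t *\<^sub>R U$j"
  by (simp add: comb_add comb_scale comb_axis)

lemma cont_mult_left: "continuous_on UNIV (\<lambda>U::real^'r^'s. Q ** U)"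
  unfolding matrix_matrix_mult_def by (intro continuous_intros)



context
  fixes M :: "(real^'r^'s) measure"
  assumes haar: "haar_stiefel M"
begin

lemma ps: "prob_space M" using haar by (simp add: haar_stiefel_def)
lemma sets_M: "sets M = sets borel" using haar by (simp add: haar_stiefel_def)
lemma space_M: "space M = UNIV" using sets_eq_imp_space_eq[OF sets_M] by simp

lemma AE_st: "AE U in M. U \<in> stiefel"
proof -
  have "emeasure M stiefel = 1" using haar by (simp add: haar_stiefel_def)
  hence "measure M stiefel = 1" by (simp add: measure_def)
  thus ?thesis using prob_space.AE_prob_1[OF ps] by blast
qed

lemma stiefel_sets: "stiefel \<in> sets M"
  unfolding sets_M by (rule borel_closed[OF closed_stiefel])

lemma meas_cont: "continuous_on UNIV f \<Longrightarrow> f \<in> borel_measurable M"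
  using measurable_cong_sets[OF sets_M refl] borel_measurable_continuous_onI by blast

lemma int_cont:
  fixes f :: "real^'r^'s \<Rightarrow> real"
  assumes "continuous_on UNIV f" shows "integrable M f"
proof -
  obtain B where B: "\<And>U. U \<in> stiefel \<Longrightarrow> \<bar>f U\<bar> \<le> B" using cont_bounded_stiefel assms by blast
  have "AE U in M. norm (f U) \<le> B" using AE_st by eventually_elim (use B in auto)
  thus ?thesis
    using prob_space.finite_measure[OF ps] finite_measure.integrable_const_bound meas_cont[OF assms]
    by blast
qed

lemma invariance:
  fixes f :: "real^'r^'s \<Rightarrow> real"
  assumes Q: "orthogonal_matrix (Q::real^'s^'s)" and f: "continuous_on UNIV f"
  shows "(\<integral>U. f (Q ** U) \<partial>M) = (\<integral>U. f U \<partial>M)"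
proof -
  have d: "distr M M (\<lambda>U. Q ** U) = M" using haar Q by (simp add: haar_stiefel_def)
  have m: "(\<lambda>U. Q ** U) \<in> measurable M M"
    using measurable_cong_sets[OF sets_M sets_M] borel_measurable_continuous_onI[OF cont_mult_left]
    by blast
  have "(\<integral>U. f U \<partial>M) = (\<integral>U. f U \<partial>(distr M M (\<lambda>U. Q ** U)))" using d by simp
  also have "\<dots> = (\<integral>U. f (Q ** U) \<partial>M)"
    by (rule integral_distr[OF m meas_cont[OF f]])
  finally show ?thesis by simp
qed

definition mom :: "nat \<Rightarrow> real^'s \<Rightarrow> real" where
  "mom k a = (\<integral>U. G a U ^ k \<partial>M)"

lemma mom_unit:
  assumes "norm a = 1" shows "mom k a = mom k (axis i 1)"
proof -
  obtain A where A: "orthogonal_matrix A" "A *v axis i 1 = a"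
    using orthogonal_matrix_exists_basis assms by blast
  have "mom k (axis i 1) = (\<integral>U. G (axis i 1) (transpose A ** U) ^ k \<partial>M)"
    unfolding mom_def
    by (rule invariance[symmetric]) (use A in \<open>auto intro: continuous_intros\<close>)
  also have "\<dots> = mom k a" unfolding mom_def G_mult using A by simp
  finally show ?thesis by simp
qed

lemma mom_scale: "mom k (c *\<^sub>R a) = c^(2*k) * mom k a"
  unfolding mom_def G_scale by (simp add: power_mult_distrib power_mult)

lemma mom_nonzero:
  assumes "a \<noteq> 0" shows "mom k a = norm a ^ (2*k) * mom k (axis i 1)"
proof -
  have "a = norm a *\<^sub>R (a /\<^sub>R norm a)" using assms by simp
  hence "mom k a = norm a ^ (2*k) * mom k (a /\<^sub>R norm a)" using mom_scale by metis
  also have "mom k (a /\<^sub>R norm a) = mom k (axis i 1)"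
    by (rule mom_unit) (use assms in simp)
  finally show ?thesis .
qed

end


lemma coeff3: "coeff [:a,b,c:] i = (if i = 0 then a else if i = 1 then b else if i = 2 then c else (0::real))"
  by (cases i; cases "i - 1"; cases "i - 2") (auto simp: numeral_2_eq_2 coeff_pCons split: nat.splits)

lemma coeff_pow0: "coeff ([:a,b,c:]^k) 0 = (a::real)^k"
  by (simp add: coeff_0_power)

lemma mult3_coeff: "coeff ([:a,b,c:] * q) (Suc (Suc n)) = a * coeff q (Suc (Suc n)) + b * coeff q (Suc n) + (c::real) * coeff q n"
  by (simp add: coeff_pCons)

lemma mult3_coeff1: "coeff ([:a,b,c:] * q) (Suc 0) = a * coeff q (Suc 0) + (b::real) * coeff q 0"
  by (simp add: coeff_pCons)

lemma coeff_pow1: "coeff ([:a,b,c:]^k) (Suc 0) = of_nat k * a^(k-1) * (b::real)"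
proof (induction k)
  case 0 then show ?case by simp
next
  case (Suc k)
  have e: "coeff ([:a,b,c:]^Suc k) (Suc 0) = a * coeff ([:a,b,c:]^k) (Suc 0) + b * coeff ([:a,b,c:]^k) 0"
    using mult3_coeff1[of a b c "[:a,b,c:]^k"] by simp
  have f: "a * (of_nat k * a^(k-1) * b) = of_nat k * a^k * b" by (cases k) (auto simp: algebra_simps)
  show ?case
    unfolding e Suc.IH coeff_pow0 by (cases k) (auto simp: algebra_simps)
qed

lemma coeff_pow2: "coeff ([:a,b,c:]^k) 2 = of_nat k * a^(k-1) * c + of_nat (k choose 2) * a^(k-2) * (b::real)^2"
proof (induction k)
  case 0 then show ?case by simp
next
  case (Suc k)
  have e: "coeff ([:a,b,c:]^Suc k) 2 = a * coeff ([:a,b,c:]^k) 2 + b * coeff ([:a,b,c:]^k) (Suc 0) + c * coeff ([:a,b,c:]^k) 0"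
    using mult3_coeff[of a b c "[:a,b,c:]^k" 0] by (simp add: numeral_2_eq_2)
  show ?case
  proof (cases k)
    case 0 then show ?thesis using e by simp
  next
    case (Suc m)
    show ?thesis
    proof (cases m)
      case 0 then show ?thesis using e Suc Suc.IH by (simp add: coeff_pow1 coeff_pow0 power2_eq_square algebra_simps numeral_2_eq_2)
    next
      case (Suc m')
      have c2: "real (Suc k choose 2) = real (k choose 2) + real k" 
        by (simp add: numeral_2_eq_2)
      have p: "a^(k-1) = a^(Suc m')" "a^(k-2) = a^m'" "a^(Suc k-1) = a * a^(Suc m')" "a^(Suc k-2) = a^(Suc m')"
        "a^k = a * a^(Suc m')"
        using \<open>k = Suc m\<close> Suc by auto
      show ?thesis unfolding e Suc.IH coeff_pow1 coeff_pow0 c2 p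
        by (simp add: power2_eq_square algebra_simps)
    qed
  qed
qed

lemma degree_pow3: "degree ([:a,b,c:]^k) \<le> 2 * k"
proof -
  have "degree [:a,b,c:] \<le> 2" by (simp add: numeral_2_eq_2)
  thus ?thesis using degree_power_le[of "[:a,b,c:]" k] by (metis le_trans mult.commute mult_le_mono1)
qed

lemma poly_sum_N: "degree p \<le> N \<Longrightarrow> poly p (x::real) = (\<Sum>n\<le>N. coeff p n * x^n)"
  by (subst poly_altdef, rule sum.mono_neutral_left) (auto simp: coeff_eq_0)

lemma cont_coeff3:
  fixes f g h :: "'a::topological_space \<Rightarrow> real"
  assumes "continuous_on UNIV f" "continuous_on UNIV g" "continuous_on UNIV h"
  shows "continuous_on UNIV (\<lambda>U. coeff ([:f U, g U, h U:]^k) n)"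
proof (induction k arbitrary: n)
  case 0 then show ?case by (simp add: coeff_1 continuous_on_const)
next
  case (Suc k)
  have c: "continuous_on UNIV (\<lambda>U. coeff [:f U, g U, h U:] i)" for i
    unfolding coeff3 by (cases "i = 0"; cases "i = 1"; cases "i = 2") (use assms in \<open>auto intro: continuous_on_const\<close>)
  show ?case unfolding power_Suc coeff_mult
    by (intro continuous_intros c Suc.IH)
qed



definition P :: "real^'r^'s \<Rightarrow> 's \<Rightarrow> 's \<Rightarrow> real" where
  "P U i j = inner (U$i) (U$j)"

lemma cont_P[continuous_intros]: "continuous_on UNIV (\<lambda>U. P U i j)"
  unfolding P_def by (intro continuous_intros)

lemma G_axis: "G (axis i 1) U = P U i i"
  by (simp add: G_def comb_axis P_def power2_norm_eq_inner)

lemma G_two: "G (axis i 1 + t *\<^sub>R axis j 1) U = P U i i + 2 * t * P U i j + t^2 * P U j j"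
  unfolding G_def comb_two P_def power2_norm_eq_inner
  by (simp add: inner_add_left inner_add_right inner_commute power2_eq_square algebra_simps)

lemma norm_two: "i \<noteq> j \<Longrightarrow> norm (axis i 1 + t *\<^sub>R axis j (1::real) :: real^'s)^2 = 1 + t^2"
  unfolding power2_norm_eq_inner
  by (simp add: inner_add_left inner_add_right inner_axis_axis power2_eq_square)

lemma two_nonzero: "i \<noteq> j \<Longrightarrow> (axis i 1 + t *\<^sub>R axis j (1::real) :: real^'s) \<noteq> 0"
proof
  assume "i \<noteq> j" "axis i 1 + t *\<^sub>R axis j (1::real) = (0 :: real^'s)"
  moreover have "(1::real) + t^2 > 0" by (simp add: add_pos_nonneg)
  ultimately show False using norm_two[of i j t] by simp
qed

lemma P_sq: "P U i j = (\<Sum>l\<in>UNIV. U$i$l * U$j$l)"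
  by (simp add: P_def inner_vec_def)

lemma sum_diag: fixes U :: "real^'r^'s" assumes "U \<in> stiefel" shows "(\<Sum>j\<in>UNIV. P U j j) = real CARD('r)"
proof -
  have orth: "(\<Sum>j\<in>UNIV. U$j$l * U$j$m) = (if l = m then 1 else 0)" for l m
    using assms stiefel_iff by metis
  have "(\<Sum>j\<in>UNIV. P U j j) = (\<Sum>l\<in>UNIV. \<Sum>j\<in>UNIV. U$j$l * U$j$l)"
    unfolding P_sq by (rule sum.swap)
  also have "\<dots> = (\<Sum>l\<in>(UNIV::'r set). 1)" by (simp add: orth)
  finally show ?thesis by simp
qed

lemma sum_off: assumes "U \<in> stiefel" shows "(\<Sum>j\<in>UNIV. (P U i j)^2) = P U i i"
proof -
  have orth: "(\<Sum>j\<in>UNIV. U$j$l * U$j$m) = (if l = m then 1 else 0)" for l m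
    using assms stiefel_iff by metis
  have "(\<Sum>j\<in>UNIV. (P U i j)^2) = (\<Sum>j\<in>UNIV. \<Sum>l\<in>UNIV. \<Sum>m\<in>UNIV. U$i$l * U$i$m * (U$j$l * U$j$m))"
    unfolding P_sq power2_eq_square sum_product by (simp add: algebra_simps)
  also have "\<dots> = (\<Sum>l\<in>UNIV. \<Sum>m\<in>UNIV. \<Sum>j\<in>UNIV. U$i$l * U$i$m * (U$j$l * U$j$m))"
    by (subst sum.swap, subst (2) sum.swap, simp)
  also have "\<dots> = (\<Sum>l\<in>UNIV. \<Sum>m\<in>UNIV. U$i$l * U$i$m * (if l = m then 1 else 0))"
    by (simp add: sum_distrib_left[symmetric] orth)
  also have "\<dots> = P U i i" by (simp add: P_sq if_distrib cong: if_cong)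
  finally show ?thesis .
qed



definition cc :: "(real^'r^'s) measure \<Rightarrow> nat \<Rightarrow> real" where
  "cc M k = mom M k (axis undefined 1)"

context
  fixes M :: "(real^'r^'s) measure"
  assumes haar: "haar_stiefel M"
begin

lemma mom_X: "(\<integral>U. P U i i ^ k \<partial>M) = cc M k"
proof -
  have "(\<integral>U. P U i i ^ k \<partial>M) = mom M k (axis i 1)" by (simp add: mom_def[OF haar] G_axis)
  also have "\<dots> = cc M k" unfolding cc_def by (rule mom_unit[OF haar]) simp
  finally show ?thesis .
qed

lemma key_t:
  assumes "i \<noteq> j"
  shows "(\<integral>U. (P U i i + 2*t*P U i j + t^2*P U j j)^k \<partial>M) = (1+t^2)^k * cc M k"
proof -
  have "(\<integral>U. (P U i i + 2*t*P U i j + t^2*P U j j)^k \<partial>M) = mom M k (axis i 1 + t *\<^sub>R axis j 1)"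
    by (simp add: mom_def[OF haar] G_two)
  also have "\<dots> = norm (axis i 1 + t *\<^sub>R axis j (1::real) :: real^'s) ^ (2*k) * mom M k (axis i 1)"
    by (rule mom_nonzero[OF haar two_nonzero[OF assms]])
  also have "norm (axis i 1 + t *\<^sub>R axis j (1::real) :: real^'s) ^ (2*k) = (1+t^2)^k"
    using norm_two[OF assms, of t] by (simp add: power_mult)
  also have "mom M k (axis i 1) = cc M k" unfolding cc_def by (rule mom_unit[OF haar]) simp
  finally show ?thesis .
qed

lemma key2:
  assumes ij: "i \<noteq> j"
  shows "(\<integral>U. of_nat k * P U i i^(k-1) * P U j j + of_nat (k choose 2) * P U i i^(k-2) * (2*P U i j)^2 \<partial>M)
         = of_nat k * cc M k"
proof -
  define pp where "pp U = [:P U i i, 2 * P U i j, P U j j:]" for U :: "real^'r^'s"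
  define e where "e n = (\<integral>U. coeff (pp U ^ k) n \<partial>M)" for n
  have contc: "continuous_on UNIV (\<lambda>U. coeff (pp U ^ k) n)" for n
    unfolding pp_def by (intro cont_coeff3 continuous_intros)
  have intc: "integrable M (\<lambda>U. coeff (pp U ^ k) n * x)" for n x
    by (intro int_cont[OF haar] continuous_intros contc)
  define E where "E = (\<Sum>n\<le>2*k. monom (e n) n)"
  define R where "R = smult (cc M k) ([:1,0,1:]^k)"
  have "poly E t = poly R t" for t
  proof -
    have "poly E t = (\<Sum>n\<le>2*k. e n * t^n)"
      by (simp add: E_def poly_sum poly_monom)
    also have "\<dots> = (\<integral>U. (\<Sum>n\<le>2*k. coeff (pp U ^ k) n * t^n) \<partial>M)"
      unfolding e_def
      by (simp only: integral_mult_left_zero[symmetric], rule Bochner_Integration.integral_sum[symmetric])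
         (rule intc)
    also have "\<dots> = (\<integral>U. poly (pp U ^ k) t \<partial>M)"
      by (rule Bochner_Integration.integral_cong[OF refl], rule poly_sum_N[symmetric])
         (simp add: pp_def degree_pow3)
    also have "\<dots> = (\<integral>U. (P U i i + 2*t*P U i j + t^2*P U j j)^k \<partial>M)"
      by (simp add: pp_def poly_power power2_eq_square algebra_simps)
    also have "\<dots> = (1+t^2)^k * cc M k" by (rule key_t[OF ij])
    also have "\<dots> = poly R t" by (simp add: R_def poly_power power2_eq_square)
    finally show ?thesis .
  qed
  hence "E = R" using poly_eq_poly_eq_iff by blast
  hence c2: "coeff E 2 = coeff R 2" by simp
  show ?thesis
  proof (cases "k = 0")
    case True then show ?thesis by simp
  next
    case False
    have "coeff E 2 = e 2" using False by (simp add: E_def coeff_sum coeff_monom)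
    moreover have "coeff R 2 = of_nat k * cc M k" by (simp add: R_def coeff_pow2)
    moreover have "e 2 = (\<integral>U. of_nat k * P U i i^(k-1) * P U j j + of_nat (k choose 2) * P U i i^(k-2) * (2*P U i j)^2 \<partial>M)"
      unfolding e_def pp_def coeff_pow2 by simp
    ultimately show ?thesis using c2 by simp
  qed
qed

end


lemma choose2_real: "real (n choose 2) * 2 = real n * (real n - 1)"
proof (induction n)
  case 0 then show ?case by simp
next
  case (Suc n)
  have "Suc n choose 2 = n + (n choose 2)"
    using binomial_Suc_Suc[of n 1] by (simp add: numeral_2_eq_2)
  then show ?case using Suc by (simp add: algebra_simps)
qed

context
  fixes M :: "(real^'r^'s) measure"
  assumes haar: "haar_stiefel M"
begin

lemma recur:
  "(real CARD('r) + 2 * real m) * cc M m = (real CARD('s) + 2 * real m) * cc M (Suc m)"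
proof -
  define i :: 's where "i = undefined"
  define k where "k = Suc m"
  define f where "f j U = of_nat k * P U i i^(k-1) * P U j j + of_nat (k choose 2) * P U i i^(k-2) * (2*P U i j)^2"
    for j and U :: "real^'r^'s"
  define r where "r = real CARD('r)"
  define h where "h U = real k * ((r + 2 * real m) * P U i i ^ m - (1 + 2 * real m) * P U i i ^ Suc m)"
    for U :: "real^'r^'s"
  have contf: "continuous_on UNIV (f j)" for j unfolding f_def by (intro continuous_intros)
  have "(\<Sum>j\<in>UNIV-{i}. (\<integral>U. f j U \<partial>M)) = (\<Sum>j\<in>UNIV-{i}. of_nat k * cc M k)"
    unfolding f_def by (intro sum.cong refl key2[OF haar]) auto
  also have "\<dots> = (real CARD('s) - 1) * real k * cc M k" by (simp add: card_Diff_subset)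
  finally have A: "(\<Sum>j\<in>UNIV-{i}. (\<integral>U. f j U \<partial>M)) = (real CARD('s) - 1) * real k * cc M k" .
  have "(\<Sum>j\<in>UNIV-{i}. (\<integral>U. f j U \<partial>M)) = (\<integral>U. (\<Sum>j\<in>UNIV-{i}. f j U) \<partial>M)"
    by (rule Bochner_Integration.integral_sum[symmetric]) (intro int_cont[OF haar] contf)
  also have "\<dots> = (\<integral>U. h U \<partial>M)"
  proof (rule integral_cong_AE)
    show "(\<lambda>U. \<Sum>j\<in>UNIV - {i}. f j U) \<in> borel_measurable M"
      by (intro meas_cont[OF haar] continuous_intros contf)
    show "h \<in> borel_measurable M" unfolding h_def by (intro meas_cont[OF haar] continuous_intros)
    show "AE U in M. (\<Sum>j\<in>UNIV - {i}. f j U) = h U"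
      using AE_st[OF haar]
    proof eventually_elim
      case (elim U)
      define X where "X = P U i i"
      have s1: "(\<Sum>j\<in>UNIV-{i}. P U j j) = r - X"
        using sum_diag[OF elim] by (simp add: sum_diff1 X_def r_def)
      have s2: "(\<Sum>j\<in>UNIV-{i}. (P U i j)^2) = X - X^2"
        using sum_off[OF elim, of i] by (simp add: sum_diff1 X_def)
      have fj: "f j U = (real k * X^m) * P U j j + (4 * real (k choose 2) * X^(k-2)) * (P U i j)^2" for j
        by (simp add: f_def X_def k_def power_mult_distrib)
      have "(\<Sum>j\<in>UNIV - {i}. f j U) = real k * X^m * (\<Sum>j\<in>UNIV-{i}. P U j j)
             + 4 * real (k choose 2) * X^(k-2) * (\<Sum>j\<in>UNIV-{i}. (P U i j)^2)"
        unfolding fj by (simp add: sum.distrib sum_distrib_left)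
      also have "\<dots> = real k * X^m * (r - X) + 4 * real (k choose 2) * X^(k-2) * (X - X^2)"
        by (simp only: s1 s2)
      also have "4 * real (k choose 2) * X^(k-2) * (X - X^2) = 2 * real k * real m * (X^m - X^Suc m)"
      proof (cases m)
        case 0 then show ?thesis by (simp add: k_def)
      next
        case (Suc m')
        have c1: "real (k choose 2) * 2 = real k * real m"
          using choose2_real[of k] by (simp add: k_def)
        have c2: "X^(k-2) * (X - X^2) = X^m - X^Suc m"
          by (simp add: k_def Suc power2_eq_square algebra_simps)
        have "4 * real (k choose 2) * X^(k-2) * (X - X^2) = 2 * (real (k choose 2) * 2) * (X^(k-2) * (X - X^2))"
          by algebra
        also have "\<dots> = 2 * (real k * real m) * (X^m - X^Suc m)" by (simp only: c1 c2)
        finally show ?thesis by (simp only: mult.assoc)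
      qed
      finally show ?case unfolding h_def X_def[symmetric] by (simp add: algebra_simps)
    qed
  qed
  also have "\<dots> = real k * ((r + 2 * real m) * cc M m - (1 + 2 * real m) * cc M (Suc m))"
  proof -
    have i1: "integrable M (\<lambda>U. P U i i ^ n)" for n by (intro int_cont[OF haar] continuous_intros)
    show ?thesis unfolding h_def
      by (simp only: integral_mult_right_zero Bochner_Integration.integral_diff[OF integrable_mult_right[OF i1] integrable_mult_right[OF i1]] mom_X[OF haar])
  qed
  finally have B: "(\<Sum>j\<in>UNIV-{i}. (\<integral>U. f j U \<partial>M)) = real k * ((r + 2 * real m) * cc M m - (1 + 2 * real m) * cc M (Suc m))" .
  from A B have "real k * ((real CARD('s) - 1) * cc M k) = real k * ((r + 2 * real m) * cc M m - (1 + 2 * real m) * cc M (Suc m))"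
    by (auto simp: mult.assoc mult.left_commute)
  hence "(real CARD('s) - 1) * cc M k = (r + 2 * real m) * cc M m - (1 + 2 * real m) * cc M (Suc m)"
    by (simp add: k_def)
  thus ?thesis by (simp add: k_def r_def algebra_simps)
qed

end


lemma pow712: "k \<ge> 3 \<Longrightarrow> (2 * real k + 1) * (7/12)^k \<le> 2"
proof (induction k rule: dec_induct)
  case base then show ?case by (simp add: power_numeral_reduce)
next
  case (step k)
  have "(2 * real (Suc k) + 1) * (7/12)^Suc k = ((2 * real k + 3) * (7/12)) * (7/12)^k" by (simp add: algebra_simps)
  also have "\<dots> \<le> (2 * real k + 1) * (7/12)^k"
    by (rule mult_right_mono) (use step in auto)
  also have "\<dots> \<le> 2" by (rule step.IH)
  finally show ?case .
qed

lemma numeric: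
  fixes s r mm L c :: real and k :: nat
  assumes r: "r \<ge> 1" and mm: "mm > 0" and k: "k \<ge> 3" and kL: "real k < L" and Lk: "L \<le> real k + 1"
    and eL: "exp L = 12 * mm" and sL: "s \<ge> 12 * mm * L" and c0: "c \<ge> 0"
    and cb: "c \<le> ((r + 2 * real k) / s)^(Suc k)"
  shows "s * c / (r / mm)^(Suc k) \<le> 1/2"
proof -
  define K where "K = Suc k"
  have s0: "s > 0" using sL mm kL k by (smt (verit) mult_pos_pos of_nat_0_le_iff)
  have sk: "s \<ge> 12 * mm * real k" using sL kL mm by (smt (verit) mult_left_mono)
  have kpos: "real k > 0" using k by simp
  define q where "q = (2 * real k + 1) * mm / s"
  have q0: "q \<ge> 0" using s0 mm by (simp add: q_def)
  have "(r + 2 * real k) * mm / (r * s) \<le> q"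
  proof -
    have "r + 2 * real k \<le> r * (2 * real k + 1)" using r kpos by (simp add: algebra_simps)
    hence "(r + 2 * real k) * mm \<le> r * (2 * real k + 1) * mm" using mm by (simp add: mult_right_mono)
    thus ?thesis unfolding q_def using r s0 by (simp add: divide_simps mult_ac)
  qed
  have T0: "(r / mm)^K > 0" using r mm by simp
  have "s * c / (r / mm)^K = s * (c / (r / mm)^K)" by simp
  also have "\<dots> \<le> s * (((r + 2 * real k) / s)^K / (r / mm)^K)"
  proof (rule mult_left_mono)
    show "c / (r / mm)^K \<le> ((r + 2 * real k) / s)^K / (r / mm)^K"
      by (rule divide_right_mono[OF cb[folded K_def]]) (use T0 in linarith)
  qed (use s0 in linarith)
  also have "((r + 2 * real k) / s)^K / (r / mm)^K = ((r + 2 * real k) * mm / (r * s))^K"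
  proof -
    have "(r + 2 * real k) / s / (r / mm) = (r + 2 * real k) * mm / (r * s)"
      using s0 mm r by (simp add: field_simps)
    thus ?thesis by (simp only: power_divide[symmetric])
  qed
  also have "s * \<dots> \<le> s * q^K"
    using \<open>(r + 2 * real k) * mm / (r * s) \<le> q\<close> s0 r mm
    by (intro mult_left_mono power_mono) auto
  also have "s * q^K = (2 * real k + 1) * mm * q^k" using s0 by (simp add: K_def q_def)
  also have "q \<le> (2 * real k + 1) / (12 * real k)"
  proof -
    have "q = (2 * real k + 1) * mm / s" by (simp add: q_def)
    also have "\<dots> \<le> (2 * real k + 1) * mm / (12 * mm * real k)"
      using sk mm kpos s0 by (intro divide_left_mono) (auto intro!: mult_pos_pos)
    finally show ?thesis using mm by simp
  qed
  hence "q^k \<le> ((2 * real k + 1) / (12 * real k))^k" using q0 by (intro power_mono) auto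
  hence "(2 * real k + 1) * mm * q^k \<le> (2 * real k + 1) * mm * ((2 * real k + 1) / (12 * real k))^k"
    using mm by (intro mult_left_mono) auto
  also have "mm \<le> 3^(Suc k) / 12"
  proof -
    have "exp L \<le> exp (real (Suc k) * 1)" using Lk by simp
    also have "\<dots> = exp 1 ^ Suc k" by (rule exp_of_nat_mult)
    also have "\<dots> \<le> 3 ^ Suc k" by (intro power_mono exp_le) auto
    finally show ?thesis using eL by simp
  qed
  hence "(2 * real k + 1) * mm * ((2 * real k + 1) / (12 * real k))^k \<le>
         (2 * real k + 1) * (3^(Suc k) / 12) * ((2 * real k + 1) / (12 * real k))^k"
    by (intro mult_right_mono mult_left_mono) auto
  also have "\<dots> = (2 * real k + 1) / 4 * ((2 * real k + 1) / (4 * real k))^k"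
  proof -
    have "3^(Suc k) / 12 * ((2 * real k + 1) / (12 * real k))^k = 1/4 * (3 * ((2 * real k + 1) / (12 * real k)))^k"
      by (simp only: power_mult_distrib power_Suc)
    also have "3 * ((2 * real k + 1) / (12 * real k)) = (2 * real k + 1) / (4 * real k)" using kpos by (simp add: field_simps)
    finally show ?thesis by simp
  qed
  also have "\<dots> \<le> (2 * real k + 1) / 4 * (7/12)^k"
  proof -
    have "(2 * real k + 1) / (4 * real k) \<le> 7/12" using k kpos by (simp add: divide_simps)
    thus ?thesis using kpos by (intro mult_left_mono power_mono) auto
  qed
  also have "\<dots> \<le> 1/2" using pow712[OF k] by simp
  finally show ?thesis unfolding K_def .
qed



lemma cc0: assumes haar: "haar_stiefel M" shows "cc M 0 = 1"
proof -
  have "cc M 0 = (\<integral>U. 1 \<partial>M)" by (simp add: cc_def mom_def[OF haar])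
  also have "\<dots> = 1" using prob_space.prob_space[OF ps[OF haar]] by simp
  finally show ?thesis .
qed

lemma cc_bound:
  fixes M :: "(real^'r^'s) measure"
  assumes haar: "haar_stiefel M"
  shows "0 \<le> cc M (Suc m) \<and> cc M (Suc m) \<le> ((real CARD('r) + 2 * real m) / real CARD('s))^(Suc m)"
proof (induction m)
  define r where "r = real CARD('r)"
  define s where "s = real CARD('s)"
  have s0: "s > 0" by (simp add: s_def)
  case 0
  have "cc M 1 = r / s" using recur[OF haar, of 0] cc0[OF haar] s0 by (simp add: r_def s_def field_simps)
  then show ?case by (simp add: r_def s_def)
next
  define r where "r = real CARD('r)"
  define s where "s = real CARD('s)"
  have s0: "s > 0" by (simp add: s_def)
  case (Suc m)
  have e: "cc M (Suc (Suc m)) = (r + 2 * real (Suc m)) / (s + 2 * real (Suc m)) * cc M (Suc m)"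
    using recur[OF haar, of "Suc m"] s0 by (simp add: r_def s_def field_simps)
  have q0: "0 \<le> (r + 2 * real (Suc m)) / (s + 2 * real (Suc m))" using s0 by (simp add: r_def)
  have q1: "(r + 2 * real (Suc m)) / (s + 2 * real (Suc m)) \<le> (r + 2 * real (Suc m)) / s"
    using s0 by (intro divide_left_mono) (auto simp: r_def)
  have IH: "0 \<le> cc M (Suc m)" "cc M (Suc m) \<le> ((r + 2 * real m) / s)^(Suc m)"
    using Suc by (auto simp: r_def s_def)
  have "cc M (Suc (Suc m)) \<le> (r + 2 * real (Suc m)) / s * ((r + 2 * real m) / s)^(Suc m)"
    unfolding e using q0 q1 IH by (intro mult_mono) auto
  also have "\<dots> \<le> (r + 2 * real (Suc m)) / s * ((r + 2 * real (Suc m)) / s)^(Suc m)"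
    using s0 by (intro mult_left_mono power_mono divide_right_mono) (auto simp: r_def)
  finally have "cc M (Suc (Suc m)) \<le> ((r + 2 * real (Suc m)) / s)^(Suc (Suc m))" by simp
  moreover have "0 \<le> cc M (Suc (Suc m))" unfolding e using q0 IH(1) by (rule mult_nonneg_nonneg)
  ultimately show ?case by (simp add: r_def s_def)
qed

lemma incoherent_eq:
  "(incoherent_set c :: (real^'r^'s) set) = stiefel \<inter> (\<Inter>i. {U. norm (U$i) \<le> c})"
proof -
  have "norm_2inf (U::real^'r^'s) \<le> c \<longleftrightarrow> (\<forall>i. norm (U$i) \<le> c)" for U
    unfolding norm_2inf_def by (subst Max_le_iff) auto
  thus ?thesis unfolding incoherent_set_def by auto
qed

lemma closed_incoherent: "closed (incoherent_set c :: (real^'r^'s) set)"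
  unfolding incoherent_eq
  by (intro closed_Int closed_stiefel closed_INT ballI closed_Collect_le continuous_intros)



theorem lemma15:
  fixes \<mu> :: real and n :: int and M :: "(real^'r^'s) measure"
  assumes "\<mu> > 0"
    and "real_of_int n / \<mu> \<ge> max 4 (real CARD('r))"
    and "real CARD('s) \<ge> (12 * real_of_int n / \<mu>) * ln (12 * real_of_int n / \<mu>)"
    and "haar_stiefel M"
  shows "measure M (incoherent_set (sqrt (\<mu> * real CARD('r) / real_of_int n))) \<ge> 1 / 2"
proof -
  note haar = assms(4)
  interpret prob_space M by (rule ps[OF haar])
  define mm where "mm = real_of_int n / \<mu>"
  define r where "r = real CARD('r)"
  define s where "s = real CARD('s)"
  have mm4: "mm \<ge> 4" and mmr: "mm \<ge> r" using assms(2) by (auto simp: mm_def r_def)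
  have mm0: "mm > 0" using mm4 by simp
  have r1: "r \<ge> 1" by (simp add: r_def)
  have n0: "real_of_int n > 0" using mm0 assms(1) by (simp add: mm_def zero_less_divide_iff)
  define L where "L = ln (12 * mm)"
  have eL: "exp L = 12 * mm" using mm0 by (simp add: L_def)
  have L3: "L > 3"
  proof -
    have "exp (3::real) = exp (real 3 * 1)" by simp
    also have "\<dots> = exp 1 ^ 3" by (rule exp_of_nat_mult)
    also have "\<dots> \<le> 3 ^ 3" by (intro power_mono exp_le) auto
    finally have "exp (3::real) < exp L" using eL mm4 by simp
    thus ?thesis by simp
  qed
  define k where "k = nat (ceiling L) - 1"
  have kL: "real k < L" and Lk: "L \<le> real k + 1" and k3: "k \<ge> 3"
  proof -
    have c1: "real_of_int (ceiling L) \<ge> L" by (rule le_of_int_ceiling)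
    have c2: "real_of_int (ceiling L) < L + 1" using ceiling_correct[of L] by linarith
    have c3: "ceiling L \<ge> 4" using L3 by (simp add: le_ceiling_iff)
    have ik: "int k = ceiling L - 1" using c3 unfolding k_def by linarith
    have kk: "real k = real_of_int (ceiling L) - 1"
      by (metis ik of_int_1 of_int_diff of_int_of_nat_eq)
    show "real k < L" using kk c2 by linarith
    show "L \<le> real k + 1" using kk c1 by linarith
    show "k \<ge> 3" using ik c3 by linarith
  qed
  have sL: "s \<ge> 12 * mm * L" using assms(3) by (simp add: s_def mm_def L_def mult.assoc)
  define t where "t = \<mu> * real CARD('r) / real_of_int n"
  have t_eq: "t = r / mm" using assms(1) n0 by (simp add: t_def r_def mm_def)
  have t0: "t > 0" using t_eq r1 mm0 by simp
  define K where "K = Suc k"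
  define bad where "bad i = {U \<in> space M. t^K \<le> P U i i ^ K}" for i :: 's
  have bad_sets: "bad i \<in> sets M" for i
  proof -
    have "(\<lambda>U. P U i i ^ K) \<in> borel_measurable M" by (intro meas_cont[OF haar] continuous_intros)
    thus ?thesis unfolding bad_def by measurable
  qed
  have bad_le: "measure M (bad i) \<le> cc M K / t^K" for i
  proof -
    have iP: "integrable M (\<lambda>U. P U i i ^ K)" by (intro int_cont[OF haar] continuous_intros)
    have "measure M (bad i) \<le> (\<integral>U. P U i i ^ K \<partial>M) / t^K"
      unfolding bad_def using iP
      by (rule integral_Markov_inequality_measure[where A = "space M"])
         (auto intro: int_cont[OF haar] continuous_intros simp: P_def t0)
    thus ?thesis using mom_X[OF haar] by simp
  qed
  have cb: "0 \<le> cc M K" "cc M K \<le> ((r + 2 * real k) / s)^(Suc k)"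
    using cc_bound[OF haar, of k] by (auto simp: K_def r_def s_def)
  have num: "s * cc M K / t^K \<le> 1/2"
    unfolding t_eq K_def
    by (rule numeric[OF r1 mm0 k3 kL Lk eL sL]) (use cb in \<open>auto simp: K_def\<close>)
  define B where "B = (\<Union>i. bad i)"
  have B_sets: "B \<in> sets M" unfolding B_def using bad_sets by auto
  have "measure M B \<le> (\<Sum>i\<in>UNIV. measure M (bad i))"
    unfolding B_def using finite_measure_subadditive_finite[of UNIV bad] bad_sets by auto
  also have "\<dots> \<le> (\<Sum>i\<in>(UNIV::'s set). cc M K / t^K)" by (intro sum_mono bad_le)
  also have "\<dots> = s * cc M K / t^K" by (simp add: s_def)
  finally have mB: "measure M B \<le> 1/2" using num by linarith
  have sub: "stiefel - B \<subseteq> incoherent_set (sqrt t)"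
  proof
    fix U :: "real^'r^'s" assume U: "U \<in> stiefel - B"
    have "norm (U$i) \<le> sqrt t" for i
    proof -
      have "U \<notin> bad i" using U by (auto simp: B_def)
      hence "P U i i ^ K < t^K" by (simp add: bad_def space_M[OF haar])
      hence "P U i i < t" by (rule power_less_imp_less_base) (use t0 in simp)
      hence "(norm (U$i))^2 \<le> t" by (simp add: P_def power2_norm_eq_inner)
      thus ?thesis by (rule real_le_rsqrt)
    qed
    thus "U \<in> incoherent_set (sqrt t)" using U unfolding incoherent_eq by auto
  qed
  have inc_sets: "incoherent_set (sqrt t) \<in> sets M"
    unfolding sets_M[OF haar] by (rule borel_closed[OF closed_incoherent])
  have mst: "measure M stiefel = 1"
    using haar by (simp add: haar_stiefel_def measure_def)
  have "1 / 2 \<le> measure M stiefel - measure M B" using mst mB by simp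
  also have "\<dots> \<le> measure M (stiefel - B)"
  proof -
    have "measure M (stiefel - B) = measure M stiefel - measure M (stiefel \<inter> B)"
      by (rule finite_measure_Diff'[OF stiefel_sets[OF haar] B_sets])
    moreover have "measure M (stiefel \<inter> B) \<le> measure M B"
      by (rule finite_measure_mono[OF _ B_sets]) auto
    ultimately show ?thesis by simp
  qed
  also have "\<dots> \<le> measure M (incoherent_set (sqrt t))"
    by (rule finite_measure_mono[OF sub inc_sets])
  finally show ?thesis unfolding t_def .
qed


end
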